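(* Let $X\in\mathbb{R}^{n\times D}$ and $Y\in\mathbb{R}^{n\times m}$ with $D>n\geq r:=\mathrm{rank}(X)$, and let $h\ge\min\{m,D\}$ be a positive integer. Write the compact SVD $X=W\begin{bmatrix}\Sigma_x^{1/2} & 0\end{bmatrix}\begin{bmatrix}\Phi_1^T\\ \Phi_2^T\end{bmatrix}$ with $W\in\mathbb{R}^{n\times r}$ having orthonormal columns, $\Sigma_x\in\mathbb{R}^{r\times r}$ diagonal with positive diagonal, $\Phi_1\in\mathbb{R}^{D\times r}$, $\Phi_2\in\mathbb{R}^{D\times(D-r)}$, $[\Phi_1\ \Phi_2]$ orthogonal. Let $E(V,U_1)=W^TY-\Sigma_x^{1/2}U_1V^T$ and let $(V(t),U_1(t),U_2(t))\in\mathbb{R}^{m\times h}\times\mathbb{R}^{r\times h}\times\mathbb{R}^{(D-r)\times h}$, $t\ge0$, solve $$\dot V=E^T\Sigma_x^{1/2}U_1,\qquad \dot U_1=\Sigma_x^{1/2}EV,\qquad \dot U_2=0,$$ with $E=E(V(t),U_1(t))$, starting from some $(V(0),U_1(0),U_2(0))$. Let $U(t)=\Phi_1U_1(t)+\Phi_2U_2(t)$. Assume that $(V(t),U_1(t))$ converges as $t\to\infty$ to some equilibrium point $(V(\infty),U_1(\infty))$ with $E(V(\infty),U_1(\infty))=0$, and set $U(\infty)=\Phi_1U_1(\infty)+\Phi_2U_2(0)$. If the initialization satisfies $$V(0)U_2(0)^T=0,\qquad U_1(0)U_2(0)^T=0,$$ then $U(\infty)V(\infty)^T=\hat\Theta$,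 where $\hat\Theta=X^T(XX^T)^\dagger Y$.
   Context: The dynamics above are the gradient flow of $\mathcal{L}(V,U)=\frac12\|Y-XUV^T\|_F^2$ written in coordinates $U=\Phi_1U_1+\Phi_2U_2$. $(\cdot)^\dagger$ denotes the Moore–Penrose pseudoinverse; $\hat\Theta$ is the minimum-norm solution of $\min_{\Theta}\|Y-X\Theta\|_F^2$. *)

theory Defs
  imports "HOL-Analysis.Analysis"
begin

definition is_pinv :: "real^'m^'n \<Rightarrow> real^'n^'m \<Rightarrow> bool" where
  "is_pinv A B \<longleftrightarrow> A ** B ** A = A \<and> B ** A ** B = B \<and>
     transpose (A ** B) = A ** B \<and> transpose (B ** A) = B ** A"

definition pinv :: "real^'m^'n \<Rightarrow> real^'n^'m" where
  "pinv A = (THE B. is_pinv A B)"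

definition pos_diag :: "real^'r^'r \<Rightarrow> bool" where
  "pos_diag S \<longleftrightarrow> (\<forall>i j. i \<noteq> j \<longrightarrow> S $ i $ j = 0) \<and> (\<forall>i. S $ i $ i > 0)"

text \<open>Entrywise square root; for a positive diagonal matrix this is its principal square root.\<close>
definition diag_sqrt :: "real^'r^'r \<Rightarrow> real^'r^'r" where
  "diag_sqrt S = (\<chi> i j. sqrt (S $ i $ j))"

definition resid :: "real^'r^'n \<Rightarrow> real^'m^'n \<Rightarrow> real^'r^'r \<Rightarrow> real^'h^'m \<Rightarrow> real^'h^'r \<Rightarrow> real^'m^'r" where
  "resid W Y Sx V U1 = transpose W ** Y - diag_sqrt Sx ** U1 ** transpose V"

end

theory Submission
  imports Defs
begin

lemma entry_le_norm: "\<bar>(x::real^'a^'b) $ i $ j\<bar> \<le> norm x"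
  using component_le_norm_cart[of "x$i" j] Finite_Cartesian_Product.norm_nth_le[of x i] by linarith

lemma norm_le_entries: "norm (x::real^'a^'b) \<le> (\<Sum>i\<in>UNIV. \<Sum>j\<in>UNIV. \<bar>x $ i $ j\<bar>)"
proof -
  have "norm x \<le> (\<Sum>i\<in>UNIV. norm (x$i))" unfolding norm_vec_def by (rule L2_set_le_sum) auto
  also have "\<dots> \<le> (\<Sum>i\<in>UNIV. \<Sum>j\<in>UNIV. \<bar>x $ i $ j\<bar>)"
    by (rule sum_mono) (rule norm_le_l1_cart)
  finally show ?thesis .
qed

lemma mm_norm_bound:
  fixes A :: "real^'m^'n" and B :: "real^'k^'m"
  shows "norm (A ** B) \<le> norm A * norm B * (CARD('n) * CARD('k) * CARD('m))"
proof -
  have e: "\<bar>(A ** B) $ i $ j\<bar> \<le> CARD('m) * (norm A * norm B)" for i j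
  proof -
    have "\<bar>(A ** B) $ i $ j\<bar> = \<bar>\<Sum>k\<in>UNIV. A$i$k * B$k$j\<bar>"
      by (simp add: matrix_matrix_mult_def)
    also have "\<dots> \<le> (\<Sum>k\<in>(UNIV::'m set). \<bar>A$i$k\<bar> * \<bar>B$k$j\<bar>)"
      by (rule order.trans[OF sum_abs]) (simp add: abs_mult)
    also have "\<dots> \<le> (\<Sum>k\<in>(UNIV::'m set). norm A * norm B)"
      by (rule sum_mono) (intro mult_mono entry_le_norm, auto)
    finally show ?thesis by simp
  qed
  have "norm (A ** B) \<le> (\<Sum>i\<in>UNIV. \<Sum>j\<in>UNIV. \<bar>(A ** B) $ i $ j\<bar>)" by (rule norm_le_entries)
  also have "\<dots> \<le> (\<Sum>i\<in>(UNIV::'n set). \<Sum>j\<in>(UNIV::'k set). CARD('m) * (norm A * norm B))"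
    by (intro sum_mono e)
  finally show ?thesis by (simp add: algebra_simps)
qed

lemma bb_mm: "bounded_bilinear (matrix_matrix_mult :: real^'m^'n \<Rightarrow> real^'k^'m \<Rightarrow> real^'k^'n)"
proof
  fix a a' :: "real^'m^'n" and b b' :: "real^'k^'m" and r :: real
  show "(a + a') ** b = a ** b + a' ** b"
    by (vector matrix_matrix_mult_def sum.distrib[symmetric] field_simps)
  show "a ** (b + b') = a ** b + a ** b'" by (rule matrix_add_ldistrib)
  show "(r *\<^sub>R a) ** b = r *\<^sub>R (a ** b)" by (simp add: scalar_matrix_assoc)
  show "a ** (r *\<^sub>R b) = r *\<^sub>R (a ** b)" by (simp add: matrix_scalar_ac scalar_matrix_assoc)
next
  show "\<exists>K. \<forall>(a::real^'m^'n) (b::real^'k^'m). norm (a ** b) \<le> norm a * norm b * K"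
    using mm_norm_bound by blast
qed

lemma bl_transpose: "bounded_linear (transpose :: real^'m^'n \<Rightarrow> real^'n^'m)"
proof
  fix a b :: "real^'m^'n" and r :: real
  show "transpose (a + b) = transpose a + transpose b" by (vector transpose_def)
  show "transpose (r *\<^sub>R a) = r *\<^sub>R transpose a" by (vector transpose_def)
next
  have "norm (transpose x) \<le> norm x * (CARD('m) * CARD('n))" for x :: "real^'m^'n"
  proof -
    have "norm (transpose x) \<le> (\<Sum>i\<in>(UNIV::'m set). \<Sum>j\<in>(UNIV::'n set). \<bar>transpose x $ i $ j\<bar>)" by (rule norm_le_entries)
    also have "\<dots> \<le> (\<Sum>i\<in>(UNIV::'m set). \<Sum>j\<in>(UNIV::'n set). norm x)"
      by (intro sum_mono) (simp add: transpose_def entry_le_norm)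
    finally show ?thesis by (simp add: algebra_simps)
  qed
  then show "\<exists>K. \<forall>x::real^'m^'n. norm (transpose x) \<le> norm x * K" by blast
qed

lemma diag_mult: fixes a b :: "'n::finite \<Rightarrow> real" shows "(\<chi> i j. if i = j then a i else 0) ** (\<chi> i j. if i = j then b i else 0) = (\<chi> i j. if i = j then a i * b i else (0::real))"
proof -
  have "(\<Sum>k\<in>UNIV. (if i = k then a i else 0) * (if k = j then b k else 0)) = (if i = j then a i * b i else 0)" for i j
  proof -
    have "(\<Sum>k\<in>UNIV. (if i = k then a i else 0) * (if k = j then b k else 0)) = (\<Sum>k\<in>UNIV. if k = i then (if i = j then a i * b i else 0) else 0)"
      by (rule sum.cong) auto
    then show ?thesis by simp
  qed
  then show ?thesis by (simp add: matrix_matrix_mult_def vec_eq_iff)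
qed

lemma pinv_unique:
  fixes A :: "real^'m^'n"
  assumes "is_pinv A B" "is_pinv A C" shows "B = C"
proof -
  have a1: "A ** B ** A = A" "B ** A ** B = B" "transpose (A ** B) = A ** B" "transpose (B ** A) = B ** A"
    using assms(1) unfolding is_pinv_def by auto
  have a2: "A ** C ** A = A" "C ** A ** C = C" "transpose (A ** C) = A ** C" "transpose (C ** A) = C ** A"
    using assms(2) unfolding is_pinv_def by auto
  have "B = B ** (A ** B)" using a1 by (simp add: matrix_mul_assoc)
  also have "\<dots> = B ** transpose (A ** C ** A ** B)" using a1 a2 by simp
  also have "\<dots> = B ** (transpose (A ** B) ** transpose (A ** C))"
    by (simp add: matrix_transpose_mul matrix_mul_assoc)
  also have "\<dots> = B ** A ** B ** A ** C" using a1 a2 by (simp add: matrix_mul_assoc)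
  also have "\<dots> = B ** A ** C" using a1 by simp
  finally have b: "B = B ** A ** C" .
  have cab: "C ** A ** B ** A = C ** A" by (metis a1(1) matrix_mul_assoc)
  have "C = (C ** A) ** C" using a2 by (simp add: matrix_mul_assoc)
  also have "\<dots> = transpose (C ** A ** B ** A) ** C" using a2 cab by simp
  also have "\<dots> = (transpose (B ** A) ** transpose (C ** A)) ** C"
    by (simp add: matrix_transpose_mul matrix_mul_assoc)
  also have "\<dots> = (B ** A) ** (C ** A ** C)" by (simp only: a1(4) a2(4) matrix_mul_assoc)
  also have "\<dots> = B ** A ** C" using a2 by simp
  finally show ?thesis using b by simp
qed

lemma vderiv_cont:
  assumes "\<And>t. t \<ge> 0 \<Longrightarrow> (A has_vector_derivative dA t) (at t within {0..})"
  shows "continuous_on {0..} A"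
  unfolding continuous_on_eq_continuous_within
proof
  fix x :: real assume "x \<in> {0..}"
  then show "continuous (at x within {0..}) A"
    using has_vector_derivative_continuous[OF assms[of x]] by simp
qed

lemma vderiv_open:
  assumes "\<And>t. t \<ge> 0 \<Longrightarrow> (A has_vector_derivative dA t) (at t within {0..})" "t > 0"
  shows "(A has_vector_derivative dA t) (at t)"
proof -
  have "(A has_vector_derivative dA t) (at t within {0<..})"
    by (rule has_vector_derivative_within_subset[OF assms(1)]) (use assms(2) in auto)
  then show ?thesis using has_vector_derivative_within_open[of t "{0<..}"] assms(2) by auto
qed

lemma ode_zero:
  fixes A :: "real \<Rightarrow> real^'q^'m" and B :: "real \<Rightarrow> real^'q^'r"
    and Ca :: "real \<Rightarrow> real^'r^'m" and Cb :: "real \<Rightarrow> real^'m^'r"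
  assumes dA: "\<And>t. t \<ge> 0 \<Longrightarrow> (A has_vector_derivative Ca t ** B t) (at t within {0..})"
    and dB: "\<And>t. t \<ge> 0 \<Longrightarrow> (B has_vector_derivative Cb t ** A t) (at t within {0..})"
    and c1: "continuous_on {0..} Ca" and c2: "continuous_on {0..} Cb"
    and A0: "A 0 = 0" and B0: "B 0 = 0" and T: "T \<ge> 0"
  shows "A T = 0 \<and> B T = 0"
proof (cases "T = 0")
  case True then show ?thesis using A0 B0 by simp
next
  case False
  with T have Tpos: "T > 0" by simp
  define K :: real where "K = real (CARD('m) * CARD('q) * CARD('r))"
  have K0: "K \<ge> 0" unfolding K_def by simp
  have KA: "norm (Ca t ** B t) \<le> norm (Ca t) * norm (B t) * K" for t
    using mm_norm_bound[of "Ca t" "B t"] unfolding K_def by (simp add: algebra_simps)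
  have KB: "norm (Cb t ** A t) \<le> norm (Cb t) * norm (A t) * K" for t
    using mm_norm_bound[of "Cb t" "A t"] unfolding K_def by (simp add: algebra_simps)
  have "bounded (Ca ` {0..T})"
    by (rule compact_imp_bounded[OF compact_continuous_image[OF continuous_on_subset[OF c1]]]) auto
  then obtain M1 where M1: "\<forall>t\<in>{0..T}. norm (Ca t) \<le> M1"
    unfolding bounded_iff by auto
  have "bounded (Cb ` {0..T})"
    by (rule compact_imp_bounded[OF compact_continuous_image[OF continuous_on_subset[OF c2]]]) auto
  then obtain M2 where M2: "\<forall>t\<in>{0..T}. norm (Cb t) \<le> M2"
    unfolding bounded_iff by auto
  define M where "M = \<bar>M1\<bar> + \<bar>M2\<bar>"
  have M0: "M \<ge> 0" unfolding M_def by simp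
  have MC1: "norm (Ca t) \<le> M" if "t \<in> {0..T}" for t using M1 that unfolding M_def by (meson abs_ge_self abs_ge_zero add_increasing2 add_increasing order_trans)
  have MC2: "norm (Cb t) \<le> M" if "t \<in> {0..T}" for t using M2 that unfolding M_def by (meson abs_ge_self abs_ge_zero add_increasing2 add_increasing order_trans)
  define L where "L = 2 * M * K"
  define f where "f t = A t \<bullet> A t + B t \<bullet> B t" for t
  define g where "g t = f t * exp (- L * t)" for t
  have cA: "continuous_on {0..} A" by (rule vderiv_cont[OF dA])
  have cB: "continuous_on {0..} B" by (rule vderiv_cont[OF dB])
  have cg: "continuous_on {0..T} g"
  proof -
    have "continuous_on {0..T} A" "continuous_on {0..T} B"
      using continuous_on_subset[OF cA] continuous_on_subset[OF cB] by auto
    then show ?thesis unfolding g_def f_def by (intro continuous_intros)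
  qed
  have "g T \<le> g 0"
  proof (rule DERIV_nonpos_imp_decreasing_open[OF T _ cg])
    fix t assume t: "0 < t" "t < T"
    let ?dA = "Ca t ** B t" and ?dB = "Cb t ** A t"
    have hA: "(A has_vector_derivative ?dA) (at t)" by (rule vderiv_open[OF dA t(1)])
    have hB: "(B has_vector_derivative ?dB) (at t)" by (rule vderiv_open[OF dB t(1)])
    let ?df = "A t \<bullet> ?dA + ?dA \<bullet> A t + (B t \<bullet> ?dB + ?dB \<bullet> B t)"
    have "(f has_vector_derivative ?df) (at t)"
      unfolding f_def
      by (intro has_vector_derivative_add bounded_bilinear.has_vector_derivative[OF bounded_bilinear_inner] hA hB)
    then have hf: "(f has_real_derivative ?df) (at t)"
      by (simp add: has_real_derivative_iff_has_vector_derivative)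
    have he: "((\<lambda>t. exp (- L * t)) has_real_derivative exp (- L * t) * (- L)) (at t)"
      by (auto intro!: derivative_eq_intros)
    have hg: "(g has_real_derivative (?df * exp (- L * t) + f t * (exp (- L * t) * (- L)))) (at t)"
      unfolding g_def using DERIV_mult[OF hf he] by (simp add: mult_ac)
    have tT: "t \<in> {0..T}" using t by auto
    have nA: "norm ?dA \<le> M * K * norm (B t)"
    proof -
      have "norm ?dA \<le> norm (Ca t) * norm (B t) * K" by (rule KA)
      also have "\<dots> \<le> M * norm (B t) * K"
        by (intro mult_right_mono MC1[OF tT] K0 norm_ge_zero) 
      finally show ?thesis by (simp add: algebra_simps)
    qed
    have nB: "norm ?dB \<le> M * K * norm (A t)"
    proof -
      have "norm ?dB \<le> norm (Cb t) * norm (A t) * K" by (rule KB)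
      also have "\<dots> \<le> M * norm (A t) * K"
        by (intro mult_right_mono MC2[OF tT] K0 norm_ge_zero) 
      finally show ?thesis by (simp add: algebra_simps)
    qed
    have i1: "A t \<bullet> ?dA \<le> norm (A t) * (M * K * norm (B t))"
      using norm_cauchy_schwarz[of "A t" ?dA] mult_left_mono[OF nA norm_ge_zero[of "A t"]] by linarith
    have i2: "?dA \<bullet> A t \<le> norm (A t) * (M * K * norm (B t))"
      using i1 by (simp add: inner_commute)
    have i3: "B t \<bullet> ?dB \<le> norm (B t) * (M * K * norm (A t))"
      using norm_cauchy_schwarz[of "B t" ?dB] mult_left_mono[OF nB norm_ge_zero[of "B t"]] by linarith
    have i4: "?dB \<bullet> B t \<le> norm (B t) * (M * K * norm (A t))"
      using i3 by (simp add: inner_commute)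
    have sq: "2 * (norm (A t) * norm (B t)) \<le> norm (A t) ^ 2 + norm (B t) ^ 2"
      using sum_squares_ge_zero[of "norm (A t) - norm (B t)" 0] by (simp add: power2_eq_square algebra_simps)
    have MK0: "M * K \<ge> 0" using M0 K0 by simp
    have "?df \<le> 4 * (M * K) * (norm (A t) * norm (B t))"
      using i1 i2 i3 i4 by (simp add: algebra_simps)
    also have "\<dots> \<le> 2 * (M * K) * (norm (A t) ^ 2 + norm (B t) ^ 2)"
      using mult_left_mono[OF sq MK0] by (simp add: algebra_simps)
    also have "\<dots> = L * f t"
      unfolding L_def f_def by (simp add: power2_norm_eq_inner)
    finally have dfle: "?df \<le> L * f t" .
    have "?df * exp (- L * t) + f t * (exp (- L * t) * (- L)) = (?df - L * f t) * exp (- L * t)"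
      by (simp add: algebra_simps)
    also have "\<dots> \<le> 0" using dfle by (simp add: mult_nonpos_nonneg)
    finally show "\<exists>y. (g has_real_derivative y) (at t) \<and> y \<le> 0" using hg by blast
  qed
  moreover have "g 0 = 0" unfolding g_def f_def using A0 B0 by simp
  ultimately have "f T * exp (- L * T) \<le> 0" unfolding g_def by simp
  then have "f T \<le> 0" by (simp add: mult_le_0_iff)
  then have "norm (A T) ^ 2 + norm (B T) ^ 2 \<le> 0" unfolding f_def by (simp add: power2_norm_eq_inner)
  then have "norm (A T) = 0 \<and> norm (B T) = 0"
    by (smt (verit) zero_le_power2 power2_eq_square mult_eq_0_iff)
  then show ?thesis by simp
qed

theorem proposition1:
  fixes X :: "real^'D^'n" and Y :: "real^'m^'n"
    and W :: "real^'r^'n" and Sx :: "real^'r^'r"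
    and Phi1 :: "real^'r^'D" and Phi2 :: "real^'q^'D"
    and V :: "real \<Rightarrow> real^'h^'m" and U1 :: "real \<Rightarrow> real^'h^'r" and U2 :: "real \<Rightarrow> real^'h^'q"
    and Vinf :: "real^'h^'m" and U1inf :: "real^'h^'r"
  assumes dims: "CARD('D) > CARD('n)" "CARD('r) = rank X" "CARD('q) = CARD('D) - CARD('r)"
      and hdim: "CARD('h) \<ge> min CARD('m) CARD('D)"
      and W_orth: "transpose W ** W = mat 1"
      and Sx_diag: "pos_diag Sx"
      and Phi_orth: "transpose Phi1 ** Phi1 = mat 1" "transpose Phi2 ** Phi2 = mat 1"
                    "transpose Phi1 ** Phi2 = 0"
                    "Phi1 ** transpose Phi1 + Phi2 ** transpose Phi2 = mat 1"
      and svd: "X = W ** diag_sqrt Sx ** transpose Phi1"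
      and odeV: "\<And>t. t \<ge> 0 \<Longrightarrow> (V has_vector_derivative
                   (transpose (resid W Y Sx (V t) (U1 t)) ** diag_sqrt Sx ** U1 t)) (at t within {0..})"
      and odeU1: "\<And>t. t \<ge> 0 \<Longrightarrow> (U1 has_vector_derivative
                   (diag_sqrt Sx ** resid W Y Sx (V t) (U1 t) ** V t)) (at t within {0..})"
      and odeU2: "\<And>t. t \<ge> 0 \<Longrightarrow> (U2 has_vector_derivative 0) (at t within {0..})"
      and convV: "(V \<longlongrightarrow> Vinf) at_top"
      and convU1: "(U1 \<longlongrightarrow> U1inf) at_top"
      and equil: "resid W Y Sx Vinf U1inf = 0"
      and init: "V 0 ** transpose (U2 0) = 0" "U1 0 ** transpose (U2 0) = 0"
  shows "(Phi1 ** U1inf + Phi2 ** U2 0) ** transpose Vinf = transpose X ** pinv (X ** transpose X) ** Y"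
proof -
  define S where "S = diag_sqrt Sx"
  define Si :: "real^'r^'r" where "Si = (\<chi> i j. if i = j then 1 / sqrt (Sx$i$i) else 0)"
  define Q where "Q = U2 0"
  define E where "E t = resid W Y Sx (V t) (U1 t)" for t
  have Sd: "S = (\<chi> i j. if i = j then sqrt (Sx$i$i) else 0)"
    using Sx_diag unfolding S_def diag_sqrt_def pos_diag_def by (auto simp: vec_eq_iff)
  have spos: "sqrt (Sx$i$i) \<noteq> 0" for i using Sx_diag unfolding pos_diag_def by (metis less_irrefl real_sqrt_eq_zero_cancel_iff)
  have SSi: "S ** Si = mat 1" "Si ** S = mat 1"
    unfolding Sd Si_def diag_mult mat_def using spos by (auto simp: vec_eq_iff)
  have tS: "transpose S = S" "transpose Si = Si"
    by (simp_all add: Sd Si_def transpose_def vec_eq_iff)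
  have r1: "x ** S ** Si = x" "x ** Si ** S = x" for x :: "real^'r^'a"
    by (metis SSi matrix_mul_assoc matrix_mul_rid)+
  have r2: "x ** transpose W ** W = x" "x ** transpose Phi1 ** Phi1 = x" for x :: "real^'r^'a"
    by (metis W_orth Phi_orth(1) matrix_mul_assoc matrix_mul_rid)+
  note bbl = bounded_bilinear.has_vector_derivative[OF bb_mm]
  have cV: "continuous_on {0..} V" by (rule vderiv_cont[OF odeV])
  have cU1: "continuous_on {0..} U1" by (rule vderiv_cont[OF odeU1])
  have cE: "continuous_on {0..} E"
    unfolding E_def resid_def
    by (intro continuous_intros bounded_bilinear.continuous_on[OF bb_mm] cU1
          bounded_linear.continuous_on[OF bl_transpose] cV)
  have zero: "V t ** transpose Q = 0 \<and> U1 t ** transpose Q = 0" if t: "t \<ge> 0" for t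
  proof (rule ode_zero[where Ca = "\<lambda>t. transpose (E t) ** S" and Cb = "\<lambda>t. S ** E t"])
    show "t \<ge> 0" by (rule t)
    show "V 0 ** transpose Q = 0" "U1 0 ** transpose Q = 0" using init unfolding Q_def by auto
    show "continuous_on {0..} (\<lambda>t. transpose (E t) ** S)"
      by (intro continuous_intros bounded_bilinear.continuous_on[OF bb_mm]
          bounded_linear.continuous_on[OF bl_transpose] cE)
    show "continuous_on {0..} (\<lambda>t. S ** E t)"
      by (intro continuous_intros bounded_bilinear.continuous_on[OF bb_mm] cE)
  next
    fix s :: real assume s: "s \<ge> 0"
    have "((\<lambda>t. V t ** transpose Q) has_vector_derivative
        V s ** 0 + (transpose (E s) ** S ** U1 s) ** transpose Q) (at s within {0..})"
      by (rule bbl[OF odeV[OF s, folded S_def E_def] has_vector_derivative_const])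
    then show "((\<lambda>t. V t ** transpose Q) has_vector_derivative
        (transpose (E s) ** S) ** (U1 s ** transpose Q)) (at s within {0..})"
      by (simp add: matrix_mul_assoc)
    have "((\<lambda>t. U1 t ** transpose Q) has_vector_derivative
        U1 s ** 0 + (S ** E s ** V s) ** transpose Q) (at s within {0..})"
      by (rule bbl[OF odeU1[OF s, folded S_def E_def] has_vector_derivative_const])
    then show "((\<lambda>t. U1 t ** transpose Q) has_vector_derivative
        (S ** E s) ** (V s ** transpose Q)) (at s within {0..})"
      by (simp add: matrix_mul_assoc)
  qed
  have lim1: "((\<lambda>t. V t ** transpose Q) \<longlongrightarrow> Vinf ** transpose Q) at_top"
    by (rule bounded_bilinear.tendsto[OF bb_mm convV tendsto_const])
  have "eventually (\<lambda>t. V t ** transpose Q = 0) at_top"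
    by (rule eventually_mono[OF eventually_ge_at_top[of "0::real"]]) (use zero in blast)
  then have lim2: "((\<lambda>t. V t ** transpose Q) \<longlongrightarrow> 0) at_top" by (rule tendsto_eventually)
  have VQ: "Vinf ** transpose Q = 0" using tendsto_unique[OF _ lim1 lim2] by simp
  have QV: "U2 0 ** transpose Vinf = 0"
  proof -
    have "U2 0 ** transpose Vinf = transpose (Vinf ** transpose Q)"
      unfolding Q_def by (simp add: matrix_transpose_mul)
    also have "\<dots> = 0" unfolding VQ by (simp add: transpose_def vec_eq_iff)
    finally show ?thesis .
  qed
  have eq: "transpose W ** Y = S ** U1inf ** transpose Vinf"
    using equil unfolding resid_def S_def by simp
  have UV: "U1inf ** transpose Vinf = Si ** transpose W ** Y"
  proof -
    have "Si ** (transpose W ** Y) = Si ** (S ** U1inf ** transpose Vinf)" using eq by simp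
    then show ?thesis by (simp add: matrix_mul_assoc SSi)
  qed
  define P where "P = W ** Si ** Si ** transpose W"
  have XX: "X ** transpose X = W ** S ** S ** transpose W"
    unfolding svd S_def[symmetric] by (simp add: matrix_transpose_mul matrix_mul_assoc tS r2)
  have "is_pinv (X ** transpose X) P"
    unfolding is_pinv_def XX P_def
    by (simp add: matrix_transpose_mul matrix_mul_assoc tS r1 r2)
  then have pinvP: "pinv (X ** transpose X) = P"
    unfolding pinv_def using pinv_unique by blast
  have lhs: "(Phi1 ** U1inf + Phi2 ** U2 0) ** transpose Vinf = Phi1 ** Si ** transpose W ** Y"
    by (simp add: bounded_bilinear.add_left[OF bb_mm] QV UV flip: matrix_mul_assoc)
  have rhs: "transpose X ** P ** Y = Phi1 ** Si ** transpose W ** Y"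
    unfolding svd S_def[symmetric] P_def by (simp add: matrix_transpose_mul matrix_mul_assoc tS r1 r2)
  show ?thesis using lhs rhs pinvP by simp
qed

end
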